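(* Let $\mathbf{X}$ be a set of discrete random variables with sample space $\Omega(\mathbf{X})$, let $o$ be a decomposable and smooth positive unital circuit (D-PUnC) whose root has scope $\mathbf{X}$, and let $\rho$ be a density matrix of the same size as the root operator. Then $p_{\mathbf{X}}(\mathbf{x})=\operatorname{Tr}[o(\mathbf{x})\rho]$ is a probability distribution on $\Omega(\mathbf{X})$: $p_{\mathbf{X}}(\mathbf{x})\ge 0$ for all $\mathbf{x}$ and $\sum_{\mathbf{x}\in\Omega(\mathbf{X})}p_{\mathbf{X}}(\mathbf{x})=1$.
   Context: A density matrix is a PSD complex matrix of trace one; a POVM is a finite family of PSD matrices summing to the identity. A quantum operation from $d\times d$ to $d'\times d'$ matrices is $\Phi(A)=\sum_jK_jAK_j^*$ with $d'\times d$ matrices $K_j$, $\sum_jK_j^*K_j\le\mathbb{1}$ (Loewner order); it is unital if $\Phi(\mathbb{1}_d)=\mathbb{1}_{d'}$. A positive unital circuit (in this unstructured form) over $\mathbf{X}$ is a rooted directed acyclic computation graph with three kinds of units. A leaf unit $k$ is associated with one variable $X_k$ (finite sample space $\Omega(X_k)$) and a POVM $\{e_{x}\}_{x\in\Omega(X_k)}$, and computes $o_k(x_k)=e_{x_k}$. A product unit $k$ has two inputs $k_l,k_r$ and computes $o_k=o_{k_l}(\mathbf{x}_{k_l})\otimes o_{k_r}(\mathbf{x}_{k_r})$ (Kronecker product). A sum unit $k$ with input set $\mathrm{in}(k)$ computes $o_k=\sum_{j\in\mathrm{in}(k)}w_{kj}\Phi_{kj}(o_j(\mathbf{x}_j))$,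 where the $\Phi_{kj}$ are unital quantum operations into a common matrix size and $w_{kj}>0$ are reals with $\sum_jw_{kj}=1$. The scope $\phi(k)$ of a unit is $\{X_k\}$ for a leaf and the union of the scopes of its inputs otherwise; $\mathbf{x}_k$ is an assignment to $\phi(k)$, and $o(\mathbf{x})$ denotes the root's output. The circuit is decomposable if for every product unit $\phi(k_l)\cap\phi(k_r)=\emptyset$, and smooth if all inputs of every sum unit have the same scope. *)

theory Defs
  imports "Jordan_Normal_Form.Matrix" "HOL-Library.Complex_Order" "HOL-Library.FuncSet"
begin

definition adj :: "complex mat \<Rightarrow> complex mat" where
  "adj A = mat (dim_col A) (dim_row A) (\<lambda>(i,j). cnj (A $$ (j,i)))"

definition mtrace :: "complex mat \<Rightarrow> complex" where
  "mtrace A = (\<Sum>i<dim_row A. A $$ (i,i))"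

definition kron :: "complex mat \<Rightarrow> complex mat \<Rightarrow> complex mat" where
  "kron A B = mat (dim_row A * dim_row B) (dim_col A * dim_col B)
     (\<lambda>(i,j). A $$ (i div dim_row B, j div dim_col B) * B $$ (i mod dim_row B, j mod dim_col B))"

definition psd :: "nat \<Rightarrow> complex mat \<Rightarrow> bool" where
  "psd n A \<longleftrightarrow> A \<in> carrier_mat n n \<and> adj A = A \<and>
     (\<forall>v \<in> carrier_vec n. (0::complex) \<le> (\<Sum>i<n. cnj (v $ i) * (A *\<^sub>v v) $ i))"

definition loewner_le :: "nat \<Rightarrow> complex mat \<Rightarrow> complex mat \<Rightarrow> bool" where
  "loewner_le n A B \<longleftrightarrow> A \<in> carrier_mat n n \<and> B \<in> carrier_mat n n \<and> psd n (B - A)"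

definition density :: "nat \<Rightarrow> complex mat \<Rightarrow> bool" where
  "density n \<rho> \<longleftrightarrow> psd n \<rho> \<and> mtrace \<rho> = 1"

definition msum :: "nat \<Rightarrow> nat \<Rightarrow> ('i \<Rightarrow> complex mat) \<Rightarrow> 'i set \<Rightarrow> complex mat" where
  "msum d d' f I = mat d d' (\<lambda>(i,j). \<Sum>a\<in>I. f a $$ (i,j))"

definition mlsum :: "nat \<Rightarrow> nat \<Rightarrow> complex mat list \<Rightarrow> complex mat" where
  "mlsum d d' ms = mat d d' (\<lambda>(i,j). \<Sum>m\<leftarrow>ms. m $$ (i,j))"

text \<open>Quantum operation with Kraus operators Ks (each d' x d), output size d'.\<close>
definition qop :: "nat \<Rightarrow> complex mat list \<Rightarrow> complex mat \<Rightarrow> complex mat" where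
  "qop d' Ks A = mlsum d' d' (map (\<lambda>K. K * A * adj K) Ks)"

section \<open>Positive unital circuits (DAGs represented by their tree unfolding)\<close>

text \<open>Leaf v e: variable v with POVM e; Prod l r: Kronecker product;
  Sum d ins: output size d, inputs given as (weight, Kraus operators, child).\<close>
datatype ('v,'a) circ =
    Leaf 'v "'a \<Rightarrow> complex mat"
  | Prod "('v,'a) circ" "('v,'a) circ"
  | Sum nat "(real \<times> complex mat list \<times> ('v,'a) circ) list"

fun eval :: "('v,'a) circ \<Rightarrow> ('v \<Rightarrow> 'a) \<Rightarrow> complex mat" where
  "eval (Leaf v e) x = e (x v)"
| "eval (Prod l r) x = kron (eval l x) (eval r x)"
| "eval (Sum d ins) x =
     mlsum d d (map (\<lambda>(w,Ks,c). complex_of_real w \<cdot>\<^sub>m qop d Ks (eval c x)) ins)"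

fun scope :: "('v,'a) circ \<Rightarrow> 'v set" where
  "scope (Leaf v e) = {v}"
| "scope (Prod l r) = scope l \<union> scope r"
| "scope (Sum d ins) = (\<Union>(w,Ks,c)\<in>set ins. scope c)"

fun punc :: "('v \<Rightarrow> 'a set) \<Rightarrow> ('v,'a) circ \<Rightarrow> nat \<Rightarrow> bool" where
  "punc Om (Leaf v e) d \<longleftrightarrow> finite (Om v) \<and> (\<forall>a\<in>Om v. psd d (e a))
      \<and> msum d d e (Om v) = 1\<^sub>m d"
| "punc Om (Prod l r) d \<longleftrightarrow> (\<exists>d1 d2. d = d1 * d2 \<and> punc Om l d1 \<and> punc Om r d2)"
| "punc Om (Sum d' ins) d \<longleftrightarrow> d' = d \<and> ins \<noteq> [] \<and> (\<Sum>(w,Ks,c)\<leftarrow>ins. w) = 1 \<and>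
      (\<forall>(w,Ks,c)\<in>set ins. w > 0 \<and>
         (\<exists>dj. punc Om c dj \<and> (\<forall>K\<in>set Ks. K \<in> carrier_mat d dj)
             \<and> loewner_le dj (mlsum dj dj (map (\<lambda>K. adj K * K) Ks)) (1\<^sub>m dj)
             \<and> qop d Ks (1\<^sub>m dj) = 1\<^sub>m d))"

fun decomposable :: "('v,'a) circ \<Rightarrow> bool" where
  "decomposable (Leaf v e) \<longleftrightarrow> True"
| "decomposable (Prod l r) \<longleftrightarrow> scope l \<inter> scope r = {} \<and> decomposable l \<and> decomposable r"
| "decomposable (Sum d ins) \<longleftrightarrow> (\<forall>(w,Ks,c)\<in>set ins. decomposable c)"

fun smooth :: "('v,'a) circ \<Rightarrow> bool" where
  "smooth (Leaf v e) \<longleftrightarrow> True"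
| "smooth (Prod l r) \<longleftrightarrow> smooth l \<and> smooth r"
| "smooth (Sum d ins) \<longleftrightarrow> (\<forall>(w,Ks,c)\<in>set ins. smooth c \<and>
      (\<forall>(w',Ks',c')\<in>set ins. scope c = scope c'))"

end

theory Submission
  imports Defs
begin


definition qform :: "nat set \<Rightarrow> (nat \<Rightarrow> nat \<Rightarrow> complex) \<Rightarrow> (nat \<Rightarrow> complex) \<Rightarrow> complex" where
  "qform S a v = (\<Sum>i\<in>S. \<Sum>j\<in>S. cnj (v i) * a i j * v j)"

lemma qform_insert:
  assumes "finite S" "k \<notin> S"
  shows "qform (insert k S) a u = cnj (u k) * a k k * u k + cnj (u k) * (\<Sum>j\<in>S. a k j * u j)
     + (\<Sum>i\<in>S. cnj (u i) * a i k) * u k + qform S a u"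
  using assms unfolding qform_def
  by (simp add: sum.distrib sum_distrib_left sum_distrib_right algebra_simps)

lemma qform_cong: "(\<And>i. i \<in> S \<Longrightarrow> u i = v i) \<Longrightarrow> qform S a u = qform S a v"
  unfolding qform_def by (intro sum.cong refl) auto

lemma qform_delta: assumes "finite S" "j \<in> S"
  shows "qform S a (\<lambda>i. if i = j then 1 else 0) = a j j"
proof -
  have "qform S a (\<lambda>i. if i = j then 1 else 0) = (\<Sum>i\<in>S. if i = j then (\<Sum>l\<in>S. if l = j then a i l else 0) else 0)"
    unfolding qform_def by (intro sum.cong refl) (auto intro!: sum.cong)
  also have "\<dots> = a j j" using assms by simp
  finally show ?thesis .
qed

lemma gram:
  fixes a :: "nat \<Rightarrow> nat \<Rightarrow> complex" and S :: "nat set"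
  assumes "finite S"
  shows "(\<forall>i\<in>S. \<forall>j\<in>S. cnj (a i j) = a j i) \<Longrightarrow> (\<forall>v. 0 \<le> qform S a v)
    \<Longrightarrow> \<exists>b. \<forall>i\<in>S. \<forall>j\<in>S. a i j = (\<Sum>m\<in>S. b m i * cnj (b m j))"
  using assms
proof (induction S arbitrary: a rule: finite_induct)
  case empty
  then show ?case by simp
next
  case (insert k S)
  note herm = insert.prems(1) and ps = insert.prems(2)
  define p where "p = a k k"
  have p0: "0 \<le> p"
    using ps[rule_format, of "\<lambda>i. if i = k then 1 else 0"] qform_delta[of "insert k S" k a] insert.hyps
    by (simp add: p_def)
  define r where "r = Re p"
  have pr: "p = complex_of_real r" using p0 unfolding r_def
    by (simp add: less_eq_complex_def complex_eq_iff)
  have r0: "r \<ge> 0" using p0 unfolding r_def by (simp add: less_eq_complex_def)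
  define c where "c i = a i k / complex_of_real (sqrt r)" for i
  define a' where "a' i j = a i j - c i * cnj (c j)" for i j
  have hk: "\<And>j. j \<in> insert k S \<Longrightarrow> cnj (a j k) = a k j" "\<And>j. j \<in> insert k S \<Longrightarrow> cnj (a k j) = a j k"
    using herm by auto
  have rowk: "a k j = c k * cnj (c j)" if j: "j \<in> insert k S" for j
  proof (cases "r = 0")
    case True
    have "a k j = 0"
    proof (cases "j = k")
      case True
      then show ?thesis using \<open>r = 0\<close> pr p_def by simp
    next
      case False
      with j have jS: "j \<in> S" by auto
      show ?thesis
      proof (rule ccontr)
        assume nz: "a k j \<noteq> 0"
        define R where "R = Re (a j j)"
        have ajj: "0 \<le> a j j"
          using ps[rule_format, of "\<lambda>i. if i = j then 1 else 0"] qform_delta[of "insert k S" j a] insert.hyps j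
          by simp
        define t where "t = - complex_of_real (R + 1) / cnj (a k j)"
        define u where "u i = (if i = k then t else if i = j then 1 else 0)" for i
        have s1: "(\<Sum>l\<in>S. a k l * u l) = a k j"
        proof -
          have "(\<Sum>l\<in>S. a k l * u l) = (\<Sum>l\<in>S. if l = j then a k l else 0)"
            using insert.hyps by (intro sum.cong refl) (auto simp: u_def)
          then show ?thesis using jS insert.hyps by simp
        qed
        have s2: "(\<Sum>i\<in>S. cnj (u i) * a i k) = a j k"
        proof -
          have "(\<Sum>i\<in>S. cnj (u i) * a i k) = (\<Sum>l\<in>S. if l = j then a l k else 0)"
            using insert.hyps by (intro sum.cong refl) (auto simp: u_def)
          then show ?thesis using jS insert.hyps by simp
        qed
        have s3: "qform S a u = a j j"
        proof -
          have "qform S a u = qform S a (\<lambda>i. if i = j then 1 else 0)"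
            using insert.hyps by (intro qform_cong) (auto simp: u_def)
          then show ?thesis using qform_delta[OF insert.hyps(1) jS] by simp
        qed
        have "qform (insert k S) a u = cnj t * a k j + a j k * t + a j j"
          using qform_insert[OF insert.hyps, of a u] s1 s2 s3 \<open>r = 0\<close> pr p_def
          by (simp add: u_def)
        also have "cnj t * a k j = - complex_of_real (R + 1)"
          using nz unfolding t_def by (simp add: field_simps)
        also have "a j k * t = - complex_of_real (R + 1)"
          using nz hk(2)[OF j] unfolding t_def
          by (metis complex_cnj_cancel_iff complex_cnj_zero_iff divide_minus_left mult.commute nonzero_mult_div_cancel_left times_divide_eq_right)
        finally have "qform (insert k S) a u = a j j - 2 * complex_of_real (R + 1)" by simp
        moreover have "0 \<le> qform (insert k S) a u" using ps by blast
        ultimately show False using ajj unfolding R_def by (simp add: less_eq_complex_def)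
      qed
    qed
    moreover have "c = (\<lambda>i. 0)" using True by (simp add: c_def fun_eq_iff)
    ultimately show ?thesis by simp
  next
    case False
    then have rp: "r > 0" using r0 by simp
    have ck: "c k = complex_of_real (sqrt r)"
    proof -
      have "c k = complex_of_real r / complex_of_real (sqrt r)"
        unfolding c_def p_def[symmetric] pr by simp
      also have "\<dots> = complex_of_real (r / sqrt r)" by simp
      also have "r / sqrt r = sqrt r" using rp by (simp add: real_div_sqrt)
      finally show ?thesis .
    qed
    have "cnj (c j) = a k j / complex_of_real (sqrt r)"
      unfolding c_def using hk(1)[OF j] by simp
    then show ?thesis using ck rp by simp
  qed
  have ck_real: "cnj (c k) = c k"
    unfolding c_def p_def[symmetric] pr by simp
  have colk: "a i k = c i * cnj (c k)" if i: "i \<in> insert k S" for i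
  proof -
    have "a i k = cnj (a k i)" using hk(1)[OF i] by (metis complex_cnj_cnj)
    also have "\<dots> = cnj (c k) * c i" using rowk[OF i] by simp
    finally show ?thesis using ck_real by simp
  qed
  have herm': "\<forall>i\<in>S. \<forall>j\<in>S. cnj (a' i j) = a' j i"
    using herm unfolding a'_def by auto
  have ps': "\<forall>v. 0 \<le> qform S a' v"
  proof
    fix v
    define s where "s = (\<Sum>j\<in>S. a k j * v j)"
    define t where "t = - s / p"
    define u where "u = v(k := t)"
    have uS: "\<And>i. i \<in> S \<Longrightarrow> u i = v i" using insert.hyps by (auto simp: u_def)
    have e1: "(\<Sum>j\<in>S. a k j * u j) = s" unfolding s_def using uS by simp
    have e2: "(\<Sum>i\<in>S. cnj (u i) * a i k) = cnj s"
      unfolding s_def using uS herm by (auto simp: mult.commute intro!: sum.cong)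
    have e3: "qform S a u = qform S a v" using uS by (rule qform_cong)
    have Q: "qform (insert k S) a u = cnj t * p * t + cnj t * s + cnj s * t + qform S a v"
      using qform_insert[OF insert.hyps, of a u] e1 e2 e3 by (simp add: u_def p_def)
    have cs: "(\<Sum>j\<in>S. cnj (c j) * v j) = s / complex_of_real (sqrt r)"
      unfolding s_def c_def using hk(1) by (simp add: sum_divide_distrib)
    have cs2: "(\<Sum>i\<in>S. cnj (v i) * c i) = cnj (s / complex_of_real (sqrt r))"
    proof -
      have "(\<Sum>i\<in>S. cnj (v i) * c i) = cnj (\<Sum>j\<in>S. cnj (c j) * v j)" by (simp add: mult.commute)
      then show ?thesis using cs by simp
    qed
    have Q': "qform S a' v = qform S a v - (\<Sum>i\<in>S. cnj (v i) * c i) * (\<Sum>j\<in>S. cnj (c j) * v j)"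
    proof -
      have pr2: "(\<Sum>i\<in>S. cnj (v i) * c i) * (\<Sum>j\<in>S. cnj (c j) * v j) = (\<Sum>i\<in>S. \<Sum>j\<in>S. cnj (v i) * (c i * cnj (c j)) * v j)"
        by (simp add: sum_product algebra_simps)
      show ?thesis unfolding pr2 qform_def a'_def
        by (simp add: sum_subtractf[symmetric] algebra_simps)
    qed
    have "qform S a' v = qform (insert k S) a u"
    proof (cases "r = 0")
      case True
      then show ?thesis using Q Q' cs unfolding t_def pr by simp
    next
      case False
      then have rp: "r > 0" using r0 by simp
      have sqr: "sqrt r * sqrt r = r" using rp by simp
      have sq: "complex_of_real (sqrt r) * complex_of_real (sqrt r) = complex_of_real r"
        by (simp only: of_real_mult[symmetric] sqr)
      have nz: "complex_of_real (sqrt r) \<noteq> 0" "complex_of_real r \<noteq> 0" using rp by auto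
      have "cnj (s / complex_of_real (sqrt r)) * (s / complex_of_real (sqrt r)) = cnj s * s / (complex_of_real (sqrt r) * complex_of_real (sqrt r))"
        by simp
      then have "qform S a' v = qform S a v - cnj s * s / complex_of_real r"
        unfolding Q' cs cs2 sq by simp
      moreover have "cnj (- s / complex_of_real r) * complex_of_real r * (- s / complex_of_real r) + cnj (- s / complex_of_real r) * s + cnj s * (- s / complex_of_real r)
           = - (cnj s * s / complex_of_real r)"
        using nz(2) by (simp add: field_simps)
      then have "qform (insert k S) a u = qform S a v - cnj s * s / complex_of_real r"
        unfolding Q t_def pr by simp
      ultimately show ?thesis by simp
    qed
    then show "0 \<le> qform S a' v" using ps by simp
  qed
  obtain b' where b': "\<forall>i\<in>S. \<forall>j\<in>S. a' i j = (\<Sum>m\<in>S. b' m i * cnj (b' m j))"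
    using insert.IH[OF herm' ps'] by blast
  define b where "b m i = (if m = k then c i else if i \<in> S then b' m i else 0)" for m i
  have "\<forall>i\<in>insert k S. \<forall>j\<in>insert k S. a i j = (\<Sum>m\<in>insert k S. b m i * cnj (b m j))"
  proof (intro ballI)
    fix i j assume i: "i \<in> insert k S" and j: "j \<in> insert k S"
    have sumS: "(\<Sum>m\<in>S. b m i * cnj (b m j)) = (if i \<in> S \<and> j \<in> S then (\<Sum>m\<in>S. b' m i * cnj (b' m j)) else 0)"
      using insert.hyps unfolding b_def by (auto intro!: sum.cong sum.neutral)
    have "(\<Sum>m\<in>insert k S. b m i * cnj (b m j)) = c i * cnj (c j) + (\<Sum>m\<in>S. b m i * cnj (b m j))"
      using insert.hyps by (simp add: b_def)
    also have "\<dots> = a i j"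
    proof (cases "i \<in> S \<and> j \<in> S")
      case True
      then show ?thesis using sumS b' unfolding a'_def by (metis add.commute diff_add_cancel)
    next
      case False
      then have "i = k \<or> j = k" using i j by auto
      then show ?thesis using sumS False rowk[OF j] colk[OF i] by auto
    qed
    finally show "a i j = (\<Sum>m\<in>insert k S. b m i * cnj (b m j))" by simp
  qed
  then show ?case by blast
qed



abbreviation ent :: "complex mat \<Rightarrow> nat \<Rightarrow> nat \<Rightarrow> complex" where
  "ent A \<equiv> (\<lambda>i j. A $$ (i,j))"

lemma mult_vec_sum: "A \<in> carrier_mat n m \<Longrightarrow> v \<in> carrier_vec m \<Longrightarrow> i < n \<Longrightarrow>
   (A *\<^sub>v v) $ i = (\<Sum>j<m. A $$ (i,j) * v $ j)"
  by (auto simp: scalar_prod_def lessThan_atLeast0 intro!: sum.cong)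

lemma mult_mat_sum: "A \<in> carrier_mat n m \<Longrightarrow> B \<in> carrier_mat m p \<Longrightarrow> i < n \<Longrightarrow> j < p \<Longrightarrow>
   (A * B) $$ (i,j) = (\<Sum>k<m. A $$ (i,k) * B $$ (k,j))"
  by (auto simp: scalar_prod_def lessThan_atLeast0 intro!: sum.cong)

lemma adj_entry: "i < dim_col A \<Longrightarrow> j < dim_row A \<Longrightarrow> adj A $$ (i,j) = cnj (A $$ (j,i))"
  unfolding adj_def by simp

lemma adj_dims[simp]: "dim_row (adj A) = dim_col A" "dim_col (adj A) = dim_row A"
  unfolding adj_def by simp_all

lemma herm_entry: assumes "A \<in> carrier_mat n n" "adj A = A" "i < n" "j < n"
  shows "cnj (A $$ (i,j)) = A $$ (j,i)"
  using adj_entry[of j A i] assms by simp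

lemma adj_eqI: assumes "A \<in> carrier_mat n n" "\<And>i j. i < n \<Longrightarrow> j < n \<Longrightarrow> cnj (A $$ (i,j)) = A $$ (j,i)"
  shows "adj A = A"
  using assms by (intro eq_matI) (auto simp: adj_def)

lemma psd_iff: "psd n A \<longleftrightarrow> A \<in> carrier_mat n n \<and> adj A = A \<and> (\<forall>f. 0 \<le> qform {..<n} (ent A) f)"
proof -
  have eq: "(\<Sum>i<n. cnj (v $ i) * (A *\<^sub>v v) $ i) = qform {..<n} (ent A) (\<lambda>i. v $ i)"
    if "A \<in> carrier_mat n n" "v \<in> carrier_vec n" for v
    using that unfolding qform_def
    by (intro sum.cong refl) (simp add: mult_vec_sum[OF that] sum_distrib_left algebra_simps del: index_mult_mat_vec)
  show ?thesis
  proof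
    assume "psd n A"
    then have A: "A \<in> carrier_mat n n" "adj A = A" and q: "\<forall>v\<in>carrier_vec n. 0 \<le> (\<Sum>i<n. cnj (v $ i) * (A *\<^sub>v v) $ i)"
      unfolding psd_def by auto
    have "0 \<le> qform {..<n} (ent A) f" for f
    proof -
      have "qform {..<n} (ent A) f = qform {..<n} (ent A) (\<lambda>i. vec n f $ i)"
        by (intro qform_cong) simp
      then show ?thesis using q[rule_format, of "vec n f"] eq[OF A(1), of "vec n f"] by simp
    qed
    then show "A \<in> carrier_mat n n \<and> adj A = A \<and> (\<forall>f. 0 \<le> qform {..<n} (ent A) f)" using A by simp
  next
    assume "A \<in> carrier_mat n n \<and> adj A = A \<and> (\<forall>f. 0 \<le> qform {..<n} (ent A) f)"
    then show "psd n A" unfolding psd_def using eq by auto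
  qed
qed

lemma psd_decomp: assumes "psd n A"
  shows "\<exists>b. \<forall>i<n. \<forall>j<n. A $$ (i,j) = (\<Sum>m<n. b m i * cnj (b m j))"
proof -
  have A: "A \<in> carrier_mat n n" "adj A = A" "\<forall>f. 0 \<le> qform {..<n} (ent A) f"
    using assms psd_iff by auto
  have "\<forall>i\<in>{..<n}. \<forall>j\<in>{..<n}. cnj (A $$ (i,j)) = A $$ (j,i)"
    using herm_entry[OF A(1,2)] by auto
  from gram[OF _ this A(3)] show ?thesis by auto
qed

lemma trace_nonneg: assumes "psd n A" "psd n R"
  shows "0 \<le> mtrace (A * R)"
proof -
  have A: "A \<in> carrier_mat n n" and R: "R \<in> carrier_mat n n" using assms psd_iff by auto
  obtain b where b: "\<forall>i<n. \<forall>j<n. R $$ (i,j) = (\<Sum>m<n. b m i * cnj (b m j))"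
    using psd_decomp[OF assms(2)] by blast
  have "mtrace (A * R) = (\<Sum>i<n. \<Sum>k<n. A $$ (i,k) * R $$ (k,i))"
    unfolding mtrace_def using A R by (intro sum.cong) (simp_all add: mult_mat_sum[OF A R] del: index_mult_mat, simp)
  also have "\<dots> = (\<Sum>i<n. \<Sum>k<n. \<Sum>m<n. cnj (b m i) * A $$ (i,k) * b m k)"
    using b by (auto simp: sum_distrib_left algebra_simps intro!: sum.cong)
  also have "\<dots> = (\<Sum>i<n. \<Sum>m<n. \<Sum>k<n. cnj (b m i) * A $$ (i,k) * b m k)"
    by (intro sum.cong refl sum.swap)
  also have "\<dots> = (\<Sum>m<n. \<Sum>i<n. \<Sum>k<n. cnj (b m i) * A $$ (i,k) * b m k)"
    by (rule sum.swap)
  also have "\<dots> = (\<Sum>m<n. qform {..<n} (ent A) (b m))"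
    unfolding qform_def by simp
  also have "0 \<le> \<dots>" using assms(1) psd_iff by (auto intro!: sum_nonneg)
  finally show ?thesis by simp
qed



lemma sum_split_prod: "(\<Sum>i<d1*d2. f i) = (\<Sum>a<d1. \<Sum>b<d2. f (a*d2+b::nat))"
proof -
  have "(\<Sum>i<d1*d2. f i) = (\<Sum>a<d1. sum f {a*d2..<a*d2+d2})" using sum.nat_group[of f] by metis
  also have "\<dots> = (\<Sum>a<d1. \<Sum>b<d2. f (a*d2+b))"
  proof (rule sum.cong[OF refl])
    fix a
    show "sum f {a*d2..<a*d2+d2} = (\<Sum>b<d2. f (a*d2+b))"
      using sum.shift_bounds_nat_ivl[of f 0 "a*d2" d2] by (simp add: add.commute lessThan_atLeast0)
  qed
  finally show ?thesis .
qed

lemma kron_carrier: "A \<in> carrier_mat d1 d1 \<Longrightarrow> B \<in> carrier_mat d2 d2 \<Longrightarrow> kron A B \<in> carrier_mat (d1*d2) (d1*d2)"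
  unfolding kron_def by auto

lemma kron_entry: "A \<in> carrier_mat d1 d1 \<Longrightarrow> B \<in> carrier_mat d2 d2 \<Longrightarrow> i < d1*d2 \<Longrightarrow> j < d1*d2 \<Longrightarrow>
  kron A B $$ (i,j) = A $$ (i div d2, j div d2) * B $$ (i mod d2, j mod d2)"
  unfolding kron_def by auto

lemma kron_entry': "A \<in> carrier_mat d1 d1 \<Longrightarrow> B \<in> carrier_mat d2 d2 \<Longrightarrow> a < d1 \<Longrightarrow> b < d2 \<Longrightarrow> c < d1 \<Longrightarrow> e < d2 \<Longrightarrow>
  kron A B $$ (a*d2+b, c*d2+e) = A $$ (a, c) * B $$ (b, e)"
proof -
  assume *: "A \<in> carrier_mat d1 d1" "B \<in> carrier_mat d2 d2" "a < d1" "b < d2" "c < d1" "e < d2"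
  have l: "a*d2+b < d1*d2" "c*d2+e < d1*d2"
    using * by (metis add.commute mult.commute nat_mult_less_cancel_disj
        add_less_cancel_left less_imp_le_nat mult_Suc_right  Suc_leI mult_le_mono1 order_less_le_trans)+
  show ?thesis using kron_entry[OF *(1,2) l] * by simp
qed

lemma psd_kron: assumes "psd d1 A" "psd d2 B"
  shows "psd (d1*d2) (kron A B)"
proof -
  have A: "A \<in> carrier_mat d1 d1" "adj A = A" "\<forall>f. 0 \<le> qform {..<d1} (ent A) f"
    and B: "B \<in> carrier_mat d2 d2" "adj B = B"
    using assms psd_iff by auto
  obtain \<beta> where b: "\<forall>i<d2. \<forall>j<d2. B $$ (i,j) = (\<Sum>m<d2. \<beta> m i * cnj (\<beta> m j))"
    using psd_decomp[OF assms(2)] by blast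
  have K: "kron A B \<in> carrier_mat (d1*d2) (d1*d2)" using kron_carrier[OF A(1) B(1)] .
  have herm: "adj (kron A B) = kron A B"
  proof (rule adj_eqI[OF K])
    fix i j assume i: "i < d1*d2" and j: "j < d1*d2"
    have d2: "d2 > 0" using i by (cases "d2 = 0") auto
    have lt: "i div d2 < d1" "j div d2 < d1" "i mod d2 < d2" "j mod d2 < d2"
      using i j d2 by (auto simp: less_mult_imp_div_less)
    show "cnj (kron A B $$ (i,j)) = kron A B $$ (j,i)"
      unfolding kron_entry[OF A(1) B(1) i j] kron_entry[OF A(1) B(1) j i]
      using herm_entry[OF A(1,2)] herm_entry[OF B(1,2)] lt by simp
  qed
  have "0 \<le> qform {..<d1*d2} (ent (kron A B)) f" for f
  proof -
    define F where "F a b = f (a*d2+b)" for a b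
    define w where "w m c = (\<Sum>e<d2. cnj (\<beta> m e) * F c e)" for m c
    define G where "G a c = (\<Sum>b<d2. \<Sum>e<d2. cnj (F a b) * B $$ (b,e) * F c e)" for a c
    have "qform {..<d1*d2} (ent (kron A B)) f =
        (\<Sum>a<d1. \<Sum>b<d2. \<Sum>c<d1. \<Sum>e<d2. cnj (F a b) * (A $$ (a,c) * B $$ (b,e)) * F c e)"
      unfolding qform_def sum_split_prod F_def
      by (intro sum.cong refl) (simp add: kron_entry'[OF A(1) B(1)])
    also have "\<dots> = (\<Sum>a<d1. \<Sum>c<d1. \<Sum>b<d2. \<Sum>e<d2. cnj (F a b) * (A $$ (a,c) * B $$ (b,e)) * F c e)"
      by (intro sum.cong refl sum.swap)
    also have "\<dots> = (\<Sum>a<d1. \<Sum>c<d1. A $$ (a,c) * G a c)"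
      unfolding G_def by (simp add: sum_distrib_left algebra_simps)
    also have "\<dots> = (\<Sum>a<d1. \<Sum>c<d1. A $$ (a,c) * (\<Sum>m<d2. cnj (w m a) * w m c))"
    proof (intro sum.cong refl arg_cong2[where f="(*)"])
      fix a c
      have "G a c = (\<Sum>b<d2. \<Sum>e<d2. \<Sum>m<d2. \<beta> m b * cnj (F a b) * (cnj (\<beta> m e) * F c e))"
        unfolding G_def using b by (simp add: sum_distrib_left sum_distrib_right algebra_simps)
      also have "\<dots> = (\<Sum>b<d2. \<Sum>m<d2. \<Sum>e<d2. \<beta> m b * cnj (F a b) * (cnj (\<beta> m e) * F c e))"
        by (intro sum.cong refl sum.swap)
      also have "\<dots> = (\<Sum>m<d2. \<Sum>b<d2. \<Sum>e<d2. \<beta> m b * cnj (F a b) * (cnj (\<beta> m e) * F c e))"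
        by (rule sum.swap)
      also have "\<dots> = (\<Sum>m<d2. cnj (w m a) * w m c)"
        unfolding w_def by (simp add: sum_product)
      finally show "G a c = (\<Sum>m<d2. cnj (w m a) * w m c)" .
    qed
    also have "\<dots> = (\<Sum>a<d1. \<Sum>c<d1. \<Sum>m<d2. cnj (w m a) * A $$ (a,c) * w m c)"
      by (simp add: sum_distrib_left algebra_simps)
    also have "\<dots> = (\<Sum>a<d1. \<Sum>m<d2. \<Sum>c<d1. cnj (w m a) * A $$ (a,c) * w m c)"
      by (intro sum.cong refl sum.swap)
    also have "\<dots> = (\<Sum>m<d2. qform {..<d1} (ent A) (w m))"
      unfolding qform_def by (rule sum.swap)
    finally show ?thesis using A(3) by (simp add: sum_nonneg)
  qed
  then show ?thesis using K herm psd_iff by auto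
qed



lemma swap22: "(\<Sum>i\<in>A. \<Sum>j\<in>B. \<Sum>k\<in>C. \<Sum>l\<in>D. f i j k l) = (\<Sum>k\<in>C. \<Sum>l\<in>D. \<Sum>i\<in>A. \<Sum>j\<in>B. f i j k l)"
proof -
  have "(\<Sum>i\<in>A. \<Sum>j\<in>B. \<Sum>k\<in>C. \<Sum>l\<in>D. f i j k l) = (\<Sum>i\<in>A. \<Sum>k\<in>C. \<Sum>j\<in>B. \<Sum>l\<in>D. f i j k l)"
    by (intro sum.cong refl sum.swap)
  also have "\<dots> = (\<Sum>k\<in>C. \<Sum>i\<in>A. \<Sum>j\<in>B. \<Sum>l\<in>D. f i j k l)" by (rule sum.swap)
  also have "\<dots> = (\<Sum>k\<in>C. \<Sum>i\<in>A. \<Sum>l\<in>D. \<Sum>j\<in>B. f i j k l)"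
    by (intro sum.cong refl sum.swap)
  also have "\<dots> = (\<Sum>k\<in>C. \<Sum>l\<in>D. \<Sum>i\<in>A. \<Sum>j\<in>B. f i j k l)"
    by (intro sum.cong refl sum.swap)
  finally show ?thesis .
qed

lemma mlsum_entry: "i < d \<Longrightarrow> j < d' \<Longrightarrow> mlsum d d' ms $$ (i,j) = (\<Sum>m\<leftarrow>ms. m $$ (i,j))"
  unfolding mlsum_def by simp

lemma mlsum_carrier[simp]: "mlsum d d' ms \<in> carrier_mat d d'"
  unfolding mlsum_def by simp

lemma cnj_sum_list: "cnj (\<Sum>m\<leftarrow>ms. f m) = (\<Sum>m\<leftarrow>ms. cnj (f m))"
  by (induction ms) auto

lemma qform_sum_list: "qform S (\<lambda>i j. \<Sum>m\<leftarrow>ms. g m i j) f = (\<Sum>m\<leftarrow>ms. qform S (g m) f)"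
  by (induction ms) (simp_all add: qform_def sum.distrib algebra_simps)

lemma psd_mlsum: assumes "\<forall>m\<in>set ms. psd n m"
  shows "psd n (mlsum n n ms)"
proof -
  have herm: "adj (mlsum n n ms) = mlsum n n ms"
  proof (rule adj_eqI[OF mlsum_carrier])
    fix i j assume ij: "i < n" "j < n"
    have "cnj (\<Sum>m\<leftarrow>ms. m $$ (i,j)) = (\<Sum>m\<leftarrow>ms. m $$ (j,i))"
      unfolding cnj_sum_list using assms ij psd_iff herm_entry
      by (intro arg_cong[where f=sum_list] map_cong refl) blast
    then show "cnj (mlsum n n ms $$ (i,j)) = mlsum n n ms $$ (j,i)"
      using ij by (simp add: mlsum_entry)
  qed
  have "0 \<le> qform {..<n} (ent (mlsum n n ms)) f" for f
  proof -
    have "qform {..<n} (ent (mlsum n n ms)) f = qform {..<n} (\<lambda>i j. \<Sum>m\<leftarrow>ms. m $$ (i,j)) f"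
      unfolding qform_def by (intro sum.cong refl) (simp add: mlsum_entry)
    also have "\<dots> = (\<Sum>m\<leftarrow>ms. qform {..<n} (ent m) f)" by (rule qform_sum_list)
    also have "0 \<le> \<dots>" using assms psd_iff by (intro sum_list_nonneg) auto
    finally show ?thesis by simp
  qed
  then show ?thesis using herm psd_iff by auto
qed

lemma psd_scale: assumes "psd n A" "0 \<le> w"
  shows "psd n (complex_of_real w \<cdot>\<^sub>m A)"
proof -
  have A: "A \<in> carrier_mat n n" "adj A = A" "\<forall>f. 0 \<le> qform {..<n} (ent A) f"
    using assms psd_iff by auto
  have C: "complex_of_real w \<cdot>\<^sub>m A \<in> carrier_mat n n" using A by simp
  have herm: "adj (complex_of_real w \<cdot>\<^sub>m A) = complex_of_real w \<cdot>\<^sub>m A"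
    by (rule adj_eqI[OF C]) (use A herm_entry[OF A(1,2)] in simp)
  have w0: "0 \<le> complex_of_real w" using assms(2) by (simp add: less_eq_complex_def)
  have "0 \<le> qform {..<n} (ent (complex_of_real w \<cdot>\<^sub>m A)) f" for f
  proof -
    have "qform {..<n} (ent (complex_of_real w \<cdot>\<^sub>m A)) f = complex_of_real w * qform {..<n} (ent A) f"
      unfolding qform_def using A(1) by (simp add: sum_distrib_left algebra_simps)
    then show ?thesis using w0 A(3) by simp
  qed
  then show ?thesis using C herm psd_iff by auto
qed

lemma conj_entry: assumes "K \<in> carrier_mat d dj" "A \<in> carrier_mat dj dj" "i < d" "j < d"
  shows "(K * A * adj K) $$ (i,j) = (\<Sum>l<dj. \<Sum>k<dj. K $$ (i,k) * A $$ (k,l) * cnj (K $$ (j,l)))"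
proof -
  have KA: "K * A \<in> carrier_mat d dj" using assms by simp
  have aK: "adj K \<in> carrier_mat dj d" using assms(1) by (intro carrier_matI) auto
  show ?thesis
    using assms
    by (simp add: mult_mat_sum[OF KA aK] mult_mat_sum[OF assms(1,2)] adj_entry sum_distrib_right
        del: index_mult_mat)
qed

lemma psd_conj: assumes "psd dj A" "K \<in> carrier_mat d dj"
  shows "psd d (K * A * adj K)"
proof -
  have A: "A \<in> carrier_mat dj dj" "adj A = A" "\<forall>f. 0 \<le> qform {..<dj} (ent A) f"
    using assms(1) unfolding psd_iff by auto
  have aK: "adj K \<in> carrier_mat dj d" using assms(2) by (intro carrier_matI) auto
  have C: "K * A * adj K \<in> carrier_mat d d" by (rule mult_carrier_mat[OF mult_carrier_mat[OF assms(2) A(1)] aK])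
  have herm: "adj (K * A * adj K) = K * A * adj K"
  proof (rule adj_eqI[OF C])
    fix i j assume ij: "i < d" "j < d"
    have "cnj ((K * A * adj K) $$ (i,j)) = (\<Sum>l<dj. \<Sum>k<dj. cnj (K $$ (i,k)) * A $$ (l,k) * K $$ (j,l))"
      unfolding conj_entry[OF assms(2) A(1) ij] using herm_entry[OF A(1,2)] by simp
    also have "\<dots> = (\<Sum>k<dj. \<Sum>l<dj. cnj (K $$ (i,k)) * A $$ (l,k) * K $$ (j,l))"
      by (rule sum.swap)
    also have "\<dots> = (K * A * adj K) $$ (j,i)"
      unfolding conj_entry[OF assms(2) A(1) ij(2,1)] by (simp add: algebra_simps)
    finally show "cnj ((K * A * adj K) $$ (i,j)) = (K * A * adj K) $$ (j,i)" .
  qed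
  have "0 \<le> qform {..<d} (ent (K * A * adj K)) f" for f
  proof -
    define g where "g l = (\<Sum>j<d. cnj (K $$ (j,l)) * f j)" for l
    have "qform {..<d} (ent (K * A * adj K)) f =
       (\<Sum>i<d. \<Sum>j<d. \<Sum>l<dj. \<Sum>k<dj. cnj (f i) * K $$ (i,k) * A $$ (k,l) * cnj (K $$ (j,l)) * f j)"
      unfolding qform_def by (intro sum.cong refl) (simp add: conj_entry[OF assms(2) A(1)] sum_distrib_left sum_distrib_right algebra_simps)
    also have "\<dots> = (\<Sum>l<dj. \<Sum>k<dj. \<Sum>i<d. \<Sum>j<d. cnj (f i) * K $$ (i,k) * A $$ (k,l) * cnj (K $$ (j,l)) * f j)"
      by (rule swap22)
    also have "\<dots> = (\<Sum>k<dj. \<Sum>l<dj. \<Sum>i<d. \<Sum>j<d. cnj (f i) * K $$ (i,k) * A $$ (k,l) * cnj (K $$ (j,l)) * f j)"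
      by (rule sum.swap)
    also have "\<dots> = qform {..<dj} (ent A) g"
      unfolding qform_def g_def by (simp add: sum_distrib_left sum_distrib_right algebra_simps)
    finally show ?thesis using A(3) by simp
  qed
  then show ?thesis unfolding psd_iff using C herm by blast
qed

lemma qop_entry: "i < d \<Longrightarrow> j < d \<Longrightarrow> qop d Ks A $$ (i,j) = (\<Sum>K\<leftarrow>Ks. (K * A * adj K) $$ (i,j))"
  unfolding qop_def by (simp add: mlsum_entry comp_def)

lemma psd_qop: assumes "psd dj A" "\<forall>K\<in>set Ks. K \<in> carrier_mat d dj"
  shows "psd d (qop d Ks A)"
  unfolding qop_def using assms by (intro psd_mlsum) (auto intro: psd_conj)



lemma circ_induct[case_names Leaf Prod Sum]:
  assumes "\<And>v e. P (Leaf v e)" "\<And>l r. P l \<Longrightarrow> P r \<Longrightarrow> P (circ.Prod l r)"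
    "\<And>d ins. (\<And>w Ks c. (w,Ks,c) \<in> set ins \<Longrightarrow> P c) \<Longrightarrow> P (circ.Sum d ins)"
  shows "P C"
proof (induction C rule: circ.induct)
  case (Leaf x1 x2)
  then show ?case using assms(1) by blast
next
  case (Prod x1 x2)
  then show ?case using assms(2) by blast
next
  case (Sum x1 x2)
  show ?case
  proof (rule assms(3))
    fix w Ks c assume "(w, Ks, c) \<in> set x2"
    then show "P c" using Sum[of "(w,Ks,c)" "(Ks,c)" c] by simp
  qed
qed

lemma eval_local: "(\<forall>v\<in>scope C. x v = y v) \<Longrightarrow> eval C x = eval C y"
proof (induction C rule: circ_induct)
  case (Leaf v e)
  then show ?case by simp
next
  case (Prod l r)
  then show ?case by simp
next
  case (Sum d ins)
  have "map (\<lambda>(w,Ks,c). complex_of_real w \<cdot>\<^sub>m qop d Ks (eval c x)) ins =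
        map (\<lambda>(w,Ks,c). complex_of_real w \<cdot>\<^sub>m qop d Ks (eval c y)) ins"
  proof (rule map_cong[OF refl])
    fix t assume t: "t \<in> set ins"
    obtain w Ks c where tt: "t = (w,Ks,c)" by (cases t) auto
    have "\<forall>v\<in>scope c. x v = y v" using Sum.prems t tt by auto
    then have "eval c x = eval c y" using Sum.IH t tt by blast
    then show "(\<lambda>(w,Ks,c). complex_of_real w \<cdot>\<^sub>m qop d Ks (eval c x)) t =
        (\<lambda>(w,Ks,c). complex_of_real w \<cdot>\<^sub>m qop d Ks (eval c y)) t" using tt by simp
  qed
  then show ?case by (simp only: eval.simps)
qed

lemma punc_psd: "punc Om C d \<Longrightarrow> (\<forall>v\<in>scope C. x v \<in> Om v) \<Longrightarrow> psd d (eval C x)"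
proof (induction C arbitrary: d rule: circ_induct)
  case (Leaf v e)
  then show ?case by simp
next
  case (Prod l r)
  then obtain d1 d2 where "d = d1 * d2" "punc Om l d1" "punc Om r d2" by auto
  then show ?case using Prod by (simp add: psd_kron)
next
  case (Sum d' ins)
  have dd: "d' = d" using Sum.prems by simp
  have "psd d (mlsum d d (map (\<lambda>(w,Ks,c). complex_of_real w \<cdot>\<^sub>m qop d Ks (eval c x)) ins))"
  proof (rule psd_mlsum, rule ballI)
    fix m assume "m \<in> set (map (\<lambda>(w,Ks,c). complex_of_real w \<cdot>\<^sub>m qop d Ks (eval c x)) ins)"
    then obtain w Ks c where t: "(w,Ks,c) \<in> set ins" and m: "m = complex_of_real w \<cdot>\<^sub>m qop d Ks (eval c x)"
      by auto
    obtain dj where dj: "punc Om c dj" "\<forall>K\<in>set Ks. K \<in> carrier_mat d dj" and w: "w > 0"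
      using Sum.prems(1) t by fastforce
    have "\<forall>v\<in>scope c. x v \<in> Om v" using Sum.prems(2) t by auto
    then have "psd dj (eval c x)" using Sum.IH[OF t dj(1)] by blast
    then show "psd d m" unfolding m using w dj(2) by (intro psd_scale psd_qop) auto
  qed
  then show ?case using dd by simp
qed

lemma punc_fin: "punc Om C d \<Longrightarrow> finite (scope C) \<and> (\<forall>v\<in>scope C. finite (Om v))"
proof (induction C arbitrary: d rule: circ_induct)
  case (Leaf v e)
  then show ?case by simp
next
  case (Prod l r)
  then show ?case by fastforce
next
  case (Sum d' ins)
  have "finite (scope c) \<and> (\<forall>v\<in>scope c. finite (Om v))" if t: "(w,Ks,c) \<in> set ins" for w Ks c
  proof -
    obtain dj where "punc Om c dj" using Sum.prems t by fastforce
    then show ?thesis using Sum.IH[OF t] by blast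
  qed
  then show ?case by fastforce
qed



lemma sum_sum_list_swap: "(\<Sum>x\<in>A. \<Sum>t\<leftarrow>xs. g t x) = (\<Sum>t\<leftarrow>xs. \<Sum>x\<in>A. g t x)"
  by (induction xs) (simp_all add: sum.distrib)

lemma sum_list_weights: "(\<Sum>t\<leftarrow>ins. (case t of (w,Ks,c) \<Rightarrow> complex_of_real w * z)) =
   complex_of_real (\<Sum>t\<leftarrow>ins. (case t of (w,Ks,c) \<Rightarrow> w)) * z"
  by (induction ins) (auto simp: algebra_simps split: prod.splits)

lemma sum_list_cong': "(\<And>t. t \<in> set xs \<Longrightarrow> f t = g t) \<Longrightarrow> (\<Sum>t\<leftarrow>xs. f t) = (\<Sum>t\<leftarrow>xs. g t)"
  by (metis map_cong)

lemma leaf_sum: shows "(\<Sum>x\<in>PiE {v} Om. h (x v)) = (\<Sum>a\<in>Om v. h a)"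
proof (rule sum.reindex_bij_witness[where i="\<lambda>a. restrict (\<lambda>u. a) {v}" and j="\<lambda>x. x v"])
  fix x assume x: "x \<in> PiE {v} Om"
  show "restrict (\<lambda>u. x v) {v} = x"
  proof (rule ext)
    fix u show "restrict (\<lambda>u. x v) {v} u = x u" using PiE_arb[OF x, of u] by (cases "u = v") auto
  qed
  show "x v \<in> Om v" using x by blast
next
  fix a assume a: "a \<in> Om v"
  show "restrict (\<lambda>u. a) {v} \<in> PiE {v} Om" using a by (simp only: restrict_PiE_iff) blast
  show "restrict (\<lambda>u. a) {v} v = a" by simp
next
  fix x show "h (x v) = h (x v)" by (rule refl)
qed

lemma prod_sum:
  fixes Om :: "'a \<Rightarrow> 'b set" and h :: "('a \<Rightarrow> 'b) \<Rightarrow> ('a \<Rightarrow> 'b) \<Rightarrow> 'c::comm_monoid_add"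
  assumes "A \<inter> B = {}"
  shows "(\<Sum>x\<in>PiE (A \<union> B) Om. h (restrict x A) (restrict x B)) = (\<Sum>f\<in>PiE A Om. \<Sum>g\<in>PiE B Om. h f g)"
proof -
  define mg where "mg p = (\<lambda>u. if u \<in> A then fst p u else snd p u)" for p :: "('a \<Rightarrow> 'b) \<times> ('a \<Rightarrow> 'b)"
  have "(\<Sum>x\<in>PiE (A \<union> B) Om. h (restrict x A) (restrict x B)) = (\<Sum>p\<in>PiE A Om \<times> PiE B Om. h (fst p) (snd p))"
  proof (rule sum.reindex_bij_witness[where i=mg and j="\<lambda>x. (restrict x A, restrict x B)"])
    fix x assume x: "x \<in> PiE (A \<union> B) Om"
    show "mg (restrict x A, restrict x B) = x"
    proof (rule ext)
      fix u show "mg (restrict x A, restrict x B) u = x u"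
        using PiE_arb[OF x, of u] unfolding mg_def by (cases "u \<in> A"; cases "u \<in> B") simp_all
    qed
    have "restrict x A \<in> PiE A Om" unfolding restrict_PiE_iff using PiE_mem[OF x] by blast
    moreover have "restrict x B \<in> PiE B Om" unfolding restrict_PiE_iff using PiE_mem[OF x] by blast
    ultimately show "(restrict x A, restrict x B) \<in> PiE A Om \<times> PiE B Om" by (rule SigmaI)
    show "h (fst (restrict x A, restrict x B)) (snd (restrict x A, restrict x B)) = h (restrict x A) (restrict x B)"
      by (simp only: fst_conv snd_conv)
  next
    fix p assume p: "p \<in> PiE A Om \<times> PiE B Om"
    obtain f g where pfg: "p = (f,g)" by (cases p) blast
    have f: "f \<in> PiE A Om" and g: "g \<in> PiE B Om" using p pfg by auto
    have 1: "restrict (mg p) A = f"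
    proof (rule ext)
      fix u show "restrict (mg p) A u = f u"
        using PiE_arb[OF f, of u] unfolding mg_def pfg by (cases "u \<in> A") simp_all
    qed
    have 2: "restrict (mg p) B = g"
    proof (rule ext)
      fix u show "restrict (mg p) B u = g u"
        using PiE_arb[OF g, of u] assms unfolding mg_def pfg by (cases "u \<in> B") auto
    qed
    show "(restrict (mg p) A, restrict (mg p) B) = p" using 1 2 pfg by simp
    show "mg p \<in> PiE (A \<union> B) Om"
    proof (rule PiE_I)
      fix u assume "u \<in> A \<union> B"
      then show "mg p u \<in> Om u" using PiE_mem[OF f, of u] PiE_mem[OF g, of u] unfolding mg_def pfg by auto
    next
      fix u assume "u \<notin> A \<union> B"
      then show "mg p u = undefined" using PiE_arb[OF g, of u] unfolding mg_def pfg by auto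
    qed
  qed
  also have "\<dots> = (\<Sum>f\<in>PiE A Om. \<Sum>g\<in>PiE B Om. h f g)"
    by (simp add: sum.cartesian_product case_prod_beta)
  finally show ?thesis .
qed



lemma mlsum_dim[simp]: "dim_row (mlsum d d' ms) = d" "dim_col (mlsum d d' ms) = d'"
  by (simp_all add: mlsum_def)

lemma one_mat_kron_entry: assumes "i < d1*d2" "j < d1*d2"
  shows "1\<^sub>m d1 $$ (i div d2, j div d2) * 1\<^sub>m d2 $$ (i mod d2, j mod d2) = (1\<^sub>m (d1*d2) $$ (i,j) :: complex)"
proof -
  have d2: "d2 > 0" using assms by (cases "d2 = 0") auto
  have lt: "i div d2 < d1" "j div d2 < d1" "i mod d2 < d2" "j mod d2 < d2"
    using assms d2 by (auto simp: less_mult_imp_div_less)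
  have "(i div d2 = j div d2 \<and> i mod d2 = j mod d2) \<longleftrightarrow> i = j"
    by (metis div_mult_mod_eq)
  then show ?thesis using lt assms by auto
qed

lemma punc_sum:
  fixes Om :: "'v \<Rightarrow> 'a set" and C :: "('v,'a) circ"
  shows "punc Om C d \<Longrightarrow> decomposable C \<Longrightarrow> smooth C \<Longrightarrow> i < d \<Longrightarrow> j < d \<Longrightarrow>
   (\<Sum>x\<in>PiE (scope C) Om. eval C x $$ (i,j)) = 1\<^sub>m d $$ (i,j)"
proof (induction C arbitrary: d i j rule: circ_induct)
  case (Leaf v e)
  have "(\<Sum>x\<in>PiE (scope (Leaf v e)) Om. eval (Leaf v e) x $$ (i,j)) = (\<Sum>a\<in>Om v. e a $$ (i,j))"
    using leaf_sum[where v=v and Om=Om and h="\<lambda>a. e a $$ (i,j)"] by simp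
  also have "\<dots> = msum d d e (Om v) $$ (i,j)" using Leaf.prems(4,5) unfolding msum_def by simp
  also have "msum d d e (Om v) = 1\<^sub>m d" using Leaf.prems(1) by simp
  finally show ?case .
next
  case (Prod l r)
  obtain d1 d2 where dd: "d = d1 * d2" and pl: "punc Om l d1" and pr: "punc Om r d2"
    using Prod.prems(1) by auto
  define A where "A = scope l"
  define B where "B = scope r"
  have disj: "A \<inter> B = {}" and decl: "decomposable l" and decr: "decomposable r"
    using Prod.prems(2) unfolding A_def B_def by auto
  have sml: "smooth l" and smr: "smooth r" using Prod.prems(3) by auto
  have i: "i < d1 * d2" and j: "j < d1 * d2" using Prod.prems dd by auto
  have d2: "d2 > 0" using i by (cases "d2 = 0") auto
  have lt: "i div d2 < d1" "j div d2 < d1" "i mod d2 < d2" "j mod d2 < d2"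
    using i j d2 by (auto simp: less_mult_imp_div_less)
  define H where "H f g = eval l f $$ (i div d2, j div d2) * eval r g $$ (i mod d2, j mod d2)" for f g
  have "(\<Sum>x\<in>PiE (scope (circ.Prod l r)) Om. eval (circ.Prod l r) x $$ (i,j))
      = (\<Sum>x\<in>PiE (A \<union> B) Om. H (restrict x A) (restrict x B))"
  proof (rule sum.cong)
    show "PiE (scope (circ.Prod l r)) Om = PiE (A \<union> B) Om" unfolding A_def B_def by simp
  next
    fix x assume x: "x \<in> PiE (A \<union> B) Om"
    have xl: "\<forall>v\<in>scope l. x v \<in> Om v" and xr: "\<forall>v\<in>scope r. x v \<in> Om v"
      using PiE_mem[OF x] unfolding A_def B_def by auto
    have cl: "eval l x \<in> carrier_mat d1 d1" using punc_psd[OF pl xl] psd_iff by blast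
    have cr: "eval r x \<in> carrier_mat d2 d2" using punc_psd[OF pr xr] psd_iff by blast
    have el: "eval l x = eval l (restrict x A)" by (rule eval_local) (simp add: A_def)
    have er: "eval r x = eval r (restrict x B)" by (rule eval_local) (simp add: B_def)
    show "eval (circ.Prod l r) x $$ (i,j) = H (restrict x A) (restrict x B)"
      unfolding H_def using kron_entry[OF cl cr i j] el er by simp
  qed
  also have "\<dots> = (\<Sum>f\<in>PiE A Om. \<Sum>g\<in>PiE B Om. H f g)" by (rule prod_sum[OF disj])
  also have "\<dots> = (\<Sum>f\<in>PiE A Om. eval l f $$ (i div d2, j div d2)) * (\<Sum>g\<in>PiE B Om. eval r g $$ (i mod d2, j mod d2))"
    unfolding H_def by (simp add: sum_product)
  also have "\<dots> = 1\<^sub>m d1 $$ (i div d2, j div d2) * 1\<^sub>m d2 $$ (i mod d2, j mod d2)"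
    using Prod.IH(1)[OF pl decl sml lt(1,2)] Prod.IH(2)[OF pr decr smr lt(3,4)] unfolding A_def B_def by simp
  also have "\<dots> = 1\<^sub>m d $$ (i,j)" unfolding dd by (rule one_mat_kron_entry[OF i j])
  finally show ?case .
next
  case (Sum d' ins)
  have dd: "d' = d" and ne: "ins \<noteq> []" and ws: "(\<Sum>(w,Ks,c)\<leftarrow>ins. w) = 1"
    and ch: "\<forall>(w,Ks,c)\<in>set ins. w > 0 \<and>
         (\<exists>dj. punc Om c dj \<and> (\<forall>K\<in>set Ks. K \<in> carrier_mat d dj)
             \<and> loewner_le dj (mlsum dj dj (map (\<lambda>K. adj K * K) Ks)) (1\<^sub>m dj)
             \<and> qop d Ks (1\<^sub>m dj) = 1\<^sub>m d)"
    using Sum.prems(1) by auto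
  have dec: "\<forall>(w,Ks,c)\<in>set ins. decomposable c" using Sum.prems(2) by simp
  have sm: "\<forall>(w,Ks,c)\<in>set ins. smooth c \<and> (\<forall>(w',Ks',c')\<in>set ins. scope c = scope c')"
    using Sum.prems(3) by simp
  define S where "S = scope (circ.Sum d' ins)"
  have scS: "scope c = S" if t: "(w,Ks,c) \<in> set ins" for w Ks c
  proof
    show "scope c \<subseteq> S" unfolding S_def using t by auto
    show "S \<subseteq> scope c"
    proof
      fix v assume "v \<in> S"
      then obtain w' Ks' c' where t': "(w',Ks',c') \<in> set ins" and v: "v \<in> scope c'"
        unfolding S_def by auto
      have "scope c = scope c'" using sm t t' by fastforce
      then show "v \<in> scope c" using v by simp
    qed
  qed
  define F where "F t x = (case t of (w,Ks,c) \<Rightarrow> complex_of_real w * qop d Ks (eval c x) $$ (i,j))" for t and x :: "'v \<Rightarrow> 'a"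
  have ev: "eval (circ.Sum d' ins) x $$ (i,j) = (\<Sum>t\<leftarrow>ins. F t x)" for x
  proof -
    have "eval (circ.Sum d' ins) x $$ (i,j) = (\<Sum>m\<leftarrow>map (\<lambda>(w,Ks,c). complex_of_real w \<cdot>\<^sub>m qop d Ks (eval c x)) ins. m $$ (i,j))"
      using Sum.prems(4,5) dd by (simp add: mlsum_entry)
    also have "\<dots> = (\<Sum>t\<leftarrow>ins. F t x)"
      unfolding map_map
      by (intro sum_list_cong') (auto simp: F_def qop_def Sum.prems(4,5) split: prod.splits)
    finally show ?thesis .
  qed
  have sumF: "(\<Sum>x\<in>PiE S Om. F t x) = (case t of (w,Ks,c) \<Rightarrow> complex_of_real w * 1\<^sub>m d $$ (i,j))"
    if t: "t \<in> set ins" for t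
  proof -
    obtain w Ks c where tt: "t = (w,Ks,c)" by (cases t) auto
    have t': "(w,Ks,c) \<in> set ins" using t tt by simp
    obtain dj where pc: "punc Om c dj" and Kc: "\<forall>K\<in>set Ks. K \<in> carrier_mat d dj"
      and q1: "qop d Ks (1\<^sub>m dj) = 1\<^sub>m d"
      using ch t' by fastforce
    have decc: "decomposable c" and smc: "smooth c" using dec sm t' by auto
    have sc: "scope c = S" by (rule scS[OF t'])
    have carr: "eval c x \<in> carrier_mat dj dj" if x: "x \<in> PiE S Om" for x
    proof -
      have "\<forall>v\<in>scope c. x v \<in> Om v" using PiE_mem[OF x] sc by auto
      then show ?thesis using punc_psd[OF pc] psd_iff by blast
    qed
    have IHc: "(\<Sum>x\<in>PiE S Om. eval c x $$ (k,l)) = 1\<^sub>m dj $$ (k,l)" if "k < dj" "l < dj" for k l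
      using Sum.IH[OF t' pc decc smc that] sc by simp
    have "(\<Sum>x\<in>PiE S Om. qop d Ks (eval c x) $$ (i,j))
        = (\<Sum>x\<in>PiE S Om. \<Sum>K\<leftarrow>Ks. \<Sum>l<dj. \<Sum>k<dj. K $$ (i,k) * eval c x $$ (k,l) * cnj (K $$ (j,l)))"
    proof (rule sum.cong[OF refl])
      fix x assume x: "x \<in> PiE S Om"
      show "qop d Ks (eval c x) $$ (i,j) = (\<Sum>K\<leftarrow>Ks. \<Sum>l<dj. \<Sum>k<dj. K $$ (i,k) * eval c x $$ (k,l) * cnj (K $$ (j,l)))"
        unfolding qop_entry[OF Sum.prems(4,5)]
        using conj_entry[OF _ carr[OF x] Sum.prems(4,5)] Kc dd by (intro sum_list_cong') auto
    qed
    also have "\<dots> = (\<Sum>K\<leftarrow>Ks. \<Sum>x\<in>PiE S Om. \<Sum>l<dj. \<Sum>k<dj. K $$ (i,k) * eval c x $$ (k,l) * cnj (K $$ (j,l)))"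
      by (rule sum_sum_list_swap)
    also have "\<dots> = (\<Sum>K\<leftarrow>Ks. \<Sum>l<dj. \<Sum>k<dj. K $$ (i,k) * 1\<^sub>m dj $$ (k,l) * cnj (K $$ (j,l)))"
    proof (rule sum_list_cong')
      fix K
      have "(\<Sum>x\<in>PiE S Om. \<Sum>l<dj. \<Sum>k<dj. K $$ (i,k) * eval c x $$ (k,l) * cnj (K $$ (j,l)))
          = (\<Sum>l<dj. \<Sum>x\<in>PiE S Om. \<Sum>k<dj. K $$ (i,k) * eval c x $$ (k,l) * cnj (K $$ (j,l)))"
        by (rule sum.swap)
      also have "\<dots> = (\<Sum>l<dj. \<Sum>k<dj. \<Sum>x\<in>PiE S Om. K $$ (i,k) * eval c x $$ (k,l) * cnj (K $$ (j,l)))"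
        by (intro sum.cong refl sum.swap)
      also have "\<dots> = (\<Sum>l<dj. \<Sum>k<dj. K $$ (i,k) * (\<Sum>x\<in>PiE S Om. eval c x $$ (k,l)) * cnj (K $$ (j,l)))"
        by (simp add: sum_distrib_left sum_distrib_right)
      also have "\<dots> = (\<Sum>l<dj. \<Sum>k<dj. K $$ (i,k) * 1\<^sub>m dj $$ (k,l) * cnj (K $$ (j,l)))"
        using IHc by (intro sum.cong refl) simp
      finally show "(\<Sum>x\<in>PiE S Om. \<Sum>l<dj. \<Sum>k<dj. K $$ (i,k) * eval c x $$ (k,l) * cnj (K $$ (j,l)))
          = (\<Sum>l<dj. \<Sum>k<dj. K $$ (i,k) * 1\<^sub>m dj $$ (k,l) * cnj (K $$ (j,l)))" .
    qed
    also have "\<dots> = qop d Ks (1\<^sub>m dj) $$ (i,j)"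
      unfolding qop_entry[OF Sum.prems(4,5)]
      using conj_entry[OF _ one_carrier_mat Sum.prems(4,5)] Kc dd by (intro sum_list_cong') auto
    also have "\<dots> = 1\<^sub>m d $$ (i,j)" using q1 by simp
    finally have "(\<Sum>x\<in>PiE S Om. qop d Ks (eval c x) $$ (i,j)) = 1\<^sub>m d $$ (i,j)" .
    then show ?thesis unfolding F_def tt by (simp add: sum_distrib_left[symmetric])
  qed
  have "(\<Sum>x\<in>PiE (scope (circ.Sum d' ins)) Om. eval (circ.Sum d' ins) x $$ (i,j))
      = (\<Sum>x\<in>PiE S Om. \<Sum>t\<leftarrow>ins. F t x)" unfolding S_def ev by simp
  also have "\<dots> = (\<Sum>t\<leftarrow>ins. \<Sum>x\<in>PiE S Om. F t x)" by (rule sum_sum_list_swap)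
  also have "\<dots> = (\<Sum>t\<leftarrow>ins. (case t of (w,Ks,c) \<Rightarrow> complex_of_real w * 1\<^sub>m d $$ (i,j)))"
    using sumF by (rule sum_list_cong')
  also have "\<dots> = complex_of_real (\<Sum>t\<leftarrow>ins. (case t of (w,Ks,c) \<Rightarrow> w)) * 1\<^sub>m d $$ (i,j)"
    by (rule sum_list_weights)
  also have "\<dots> = 1\<^sub>m d $$ (i,j)" using ws by (simp only: of_real_1 mult_1)
  finally show ?case .
qed



theorem theorem3:
  fixes Om :: "'v \<Rightarrow> 'a set" and C :: "('v,'a) circ" and X :: "'v set"
    and d :: nat and \<rho> :: "complex mat"
  assumes "punc Om C d" and "decomposable C" and "smooth C"
    and "scope C = X" and "density d \<rho>"
  shows "(\<forall>x \<in> PiE X Om. 0 \<le> mtrace (eval C x * \<rho>))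
       \<and> (\<Sum>x \<in> PiE X Om. mtrace (eval C x * \<rho>)) = 1"
proof -
  have pr: "psd d \<rho>" and tr: "mtrace \<rho> = 1" using assms(5) unfolding density_def by auto
  have R: "\<rho> \<in> carrier_mat d d" using pr unfolding psd_iff by blast
  have E: "psd d (eval C x)" if x: "x \<in> PiE X Om" for x
  proof -
    have "\<forall>v\<in>scope C. x v \<in> Om v" using PiE_mem[OF x] assms(4) by blast
    then show ?thesis using punc_psd[OF assms(1)] by blast
  qed
  have EC: "eval C x \<in> carrier_mat d d" if x: "x \<in> PiE X Om" for x
    using E[OF x] unfolding psd_iff by blast
  have part1: "\<forall>x \<in> PiE X Om. 0 \<le> mtrace (eval C x * \<rho>)"
    using E trace_nonneg pr by blast
  have "(\<Sum>x \<in> PiE X Om. mtrace (eval C x * \<rho>))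
      = (\<Sum>x \<in> PiE X Om. \<Sum>i<d. \<Sum>k<d. eval C x $$ (i,k) * \<rho> $$ (k,i))"
  proof (rule sum.cong[OF refl])
    fix x assume x: "x \<in> PiE X Om"
    have "dim_row (eval C x * \<rho>) = d" using EC[OF x] by simp
    then show "mtrace (eval C x * \<rho>) = (\<Sum>i<d. \<Sum>k<d. eval C x $$ (i,k) * \<rho> $$ (k,i))"
      unfolding mtrace_def by (intro sum.cong refl) (simp_all add: mult_mat_sum[OF EC[OF x] R] del: index_mult_mat)
  qed
  also have "\<dots> = (\<Sum>i<d. \<Sum>x \<in> PiE X Om. \<Sum>k<d. eval C x $$ (i,k) * \<rho> $$ (k,i))"
    by (rule sum.swap)
  also have "\<dots> = (\<Sum>i<d. \<Sum>k<d. \<Sum>x \<in> PiE X Om. eval C x $$ (i,k) * \<rho> $$ (k,i))"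
    by (intro sum.cong refl sum.swap)
  also have "\<dots> = (\<Sum>i<d. \<Sum>k<d. (\<Sum>x \<in> PiE X Om. eval C x $$ (i,k)) * \<rho> $$ (k,i))"
    by (simp add: sum_distrib_right)
  also have "\<dots> = (\<Sum>i<d. \<Sum>k<d. 1\<^sub>m d $$ (i,k) * \<rho> $$ (k,i))"
    using punc_sum[OF assms(1-3)] assms(4) by (intro sum.cong refl) simp
  also have "\<dots> = (\<Sum>i<d. \<rho> $$ (i,i))"
  proof (rule sum.cong[OF refl])
    fix i assume i: "i \<in> {..<d}"
    have "(\<Sum>k<d. 1\<^sub>m d $$ (i,k) * \<rho> $$ (k,i)) = (\<Sum>k<d. if k = i then \<rho> $$ (k,i) else 0)"
      using i by (intro sum.cong refl) auto
    then show "(\<Sum>k<d. 1\<^sub>m d $$ (i,k) * \<rho> $$ (k,i)) = \<rho> $$ (i,i)" using i by simp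
  qed
  also have "\<dots> = 1" using tr R unfolding mtrace_def by simp
  finally show ?thesis using part1 by blast
qed

end
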